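(* Let $C$ be an independent set of the Kneser graph of flags of type $\{2,3\}$ of $\mathrm{PG}(6,q)$ and let $\xi\in\mathbb{N}$ be such that every solid of $\mathrm{PG}(6,q)$ occurs in at most $\xi$ flags of $C$. Let $(E,S)\in C$. Then there are at most $$(q^2+q+1)\begin{bmatrix}5\\2\end{bmatrix}_q\xi=(q^8+2q^7+4q^6+5q^5+6q^4+5q^3+4q^2+2q+1)\xi$$ flags $(E',S')\in C$ with $E'\cap E=\emptyset$ and $S'\cap E\neq\emptyset$.
   Context: Dimensions are projective (planes 2, solids 3). A flag of type $\{2,3\}$ is a pair $(E,S)$ of a plane $E$ and a solid $S$ with $E\subseteq S$; in the Kneser graph distinct flags $(E,S),(E',S')$ are adjacent iff $E\cap S'=\emptyset$ and $E'\cap S=\emptyset$. $\begin{bmatrix}5\\2\end{bmatrix}_q=\frac{(q^5-1)(q^4-1)}{(q^2-1)(q-1)}$. *)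

theory Defs
  imports "HOL-Analysis.Analysis" "HOL-Library.Numeral_Type"
begin

text \<open>PG(6,q) is modelled by the vector space F^7 over a finite field F with q = CARD(F).
  Projective subspaces of projective dimension d are vector subspaces of dimension d+1;
  projectively empty intersection means the vector subspaces meet only in 0.\<close>

type_synonym 'F pt7 = "'F ^ 7"

definition pg_plane :: "('F::field) pt7 set \<Rightarrow> bool" where
  "pg_plane E \<longleftrightarrow> vec.subspace E \<and> vec.dim E = 3"

definition pg_solid :: "('F::field) pt7 set \<Rightarrow> bool" where
  "pg_solid S \<longleftrightarrow> vec.subspace S \<and> vec.dim S = 4"

definition pg_flag23 :: "('F::field) pt7 set \<times> 'F pt7 set \<Rightarrow> bool" where
  "pg_flag23 f \<longleftrightarrow> pg_plane (fst f) \<and> pg_solid (snd f) \<and> fst f \<subseteq> snd f"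

definition pg_disjoint :: "('F::field) pt7 set \<Rightarrow> 'F pt7 set \<Rightarrow> bool" where
  "pg_disjoint A B \<longleftrightarrow> A \<inter> B = {0}"

definition kneser_adj :: "('F::field) pt7 set \<times> 'F pt7 set \<Rightarrow> 'F pt7 set \<times> 'F pt7 set \<Rightarrow> bool" where
  "kneser_adj f g \<longleftrightarrow> f \<noteq> g \<and> pg_disjoint (fst f) (snd g) \<and> pg_disjoint (fst g) (snd f)"

definition kneser_indep :: "(('F::field) pt7 set \<times> 'F pt7 set) set \<Rightarrow> bool" where
  "kneser_indep C \<longleftrightarrow> (\<forall>f\<in>C. pg_flag23 f) \<and> (\<forall>f\<in>C. \<forall>g\<in>C. \<not> kneser_adj f g)"

definition gauss_5_2 :: "nat \<Rightarrow> nat" where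
  "gauss_5_2 q = ((q^5 - 1) * (q^4 - 1)) div ((q^2 - 1) * (q - 1))"

end

theory Submission
  imports Defs "HOL-Computational_Algebra.Polynomial_Factorial"
begin

lemma card_span_indep:
  fixes B :: "(('F::{field,finite})^'n) set"
  assumes "vec.independent B"
  shows "card (vec.span B) = CARD('F) ^ card B"
proof -
  have fin: "finite B" using assms vec.finiteI_independent by blast
  have "vec.independent B \<longrightarrow> card (vec.span B) = CARD('F) ^ card B"
    using fin
  proof (induction B rule: finite_induct)
    case empty
    then show ?case by simp
  next
    case (insert b B)
    show ?case
    proof
      assume ind: "vec.independent (insert b B)"
      have iB: "vec.independent B" and nb: "b \<notin> vec.span B"
        using ind insert(2) by (auto simp: vec.independent_insert)
      have IH: "card (vec.span B) = CARD('F) ^ card B" using insert(3) iB by blast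
      have eq: "vec.span (insert b B) = (\<lambda>(x,c). x + c *s b) ` (vec.span B \<times> UNIV)"
      proof (rule set_eqI)
        fix y
        show "y \<in> vec.span (insert b B) \<longleftrightarrow> y \<in> (\<lambda>(x,c). x + c *s b) ` (vec.span B \<times> UNIV)"
          unfolding vec.span_insert
        proof
          assume "y \<in> {x. \<exists>k. x - k *s b \<in> vec.span B}"
          then obtain k where "y - k *s b \<in> vec.span B" by blast
          then show "y \<in> (\<lambda>(x,c). x + c *s b) ` (vec.span B \<times> UNIV)"
            by (rule_tac x="(y - k *s b, k)" in image_eqI) auto
        next
          assume "y \<in> (\<lambda>(x,c). x + c *s b) ` (vec.span B \<times> UNIV)"
          then obtain x c where "x \<in> vec.span B" "y = x + c *s b" by auto
          then show "y \<in> {x. \<exists>k. x - k *s b \<in> vec.span B}" by (auto intro!: exI[of _ c])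
        qed
      qed
      have inj: "inj_on (\<lambda>(x,c). x + c *s b) (vec.span B \<times> UNIV)"
      proof (rule inj_onI, clarsimp)
        fix x c x' c'
        assume x: "x \<in> vec.span B" and x': "x' \<in> vec.span B" and e: "x + c *s b = x' + c' *s b"
        have d: "(c - c') *s b = x' - x" using e
          by (simp add: algebra_simps vector_sadd_rdistrib vector_ssub_ldistrib)
        show "x = x' \<and> c = c'"
        proof (cases "c = c'")
          case True then show ?thesis using e by simp
        next
          case False
          have "b = (inverse (c - c') * (c - c')) *s b" using False by simp
          also have "\<dots> = (inverse (c - c')) *s ((c - c') *s b)" by (simp only: vector_smult_assoc)
          also have "\<dots> \<in> vec.span B" unfolding d
            by (intro vec.span_scale vec.span_diff x x')
          finally show ?thesis using nb by blast
        qed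
      qed
      have "card (vec.span (insert b B)) = card (vec.span B \<times> (UNIV :: 'F set))"
        unfolding eq by (rule card_image[OF inj])
      also have "\<dots> = CARD('F) ^ card B * CARD('F)" by (simp add: card_cartesian_product IH)
      finally show "card (vec.span (insert b B)) = CARD('F) ^ card (insert b B)"
        using insert(1,2) by simp
    qed
  qed
  then show ?thesis using assms by blast
qed

lemma card_subspace:
  fixes W :: "(('F::{field,finite})^'n) set"
  assumes "vec.subspace W"
  shows "card W = CARD('F) ^ vec.dim W"
proof -
  obtain B where B: "B \<subseteq> W" "vec.independent B" "W \<subseteq> vec.span B" "card B = vec.dim W"
    using vec.basis_exists by blast
  have "vec.span B = W" using B assms vec.span_minimal by blast
  then show ?thesis using card_span_indep[OF B(2)] B(4) by simp
qed

definition indep_list :: "(('F::field)^'n) list \<Rightarrow> bool" where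
  "indep_list xs \<longleftrightarrow> distinct xs \<and> vec.independent (set xs)"

lemma indep_list_snoc:
  "indep_list (xs @ [x]) \<longleftrightarrow> indep_list xs \<and> x \<notin> vec.span (set xs)"
proof (cases "x \<in> set xs")
  case True
  then show ?thesis unfolding indep_list_def using vec.span_base by auto
next
  case False
  then show ?thesis unfolding indep_list_def by (simp add: vec.independent_insert)
qed

lemma count_ext:
  fixes W :: "(('F::{field,finite})^'n) set"
  assumes W: "vec.subspace W" and bs: "indep_list bs" "set bs \<subseteq> W"
  shows "card {cs. length cs = k \<and> set cs \<subseteq> W \<and> indep_list (bs @ cs)}
         = (\<Prod>i<k. CARD('F) ^ vec.dim W - CARD('F) ^ (length bs + i))"
proof (induction k)
  case 0
  have "{cs. length cs = 0 \<and> set cs \<subseteq> W \<and> indep_list (bs @ cs)} = {[]}" using bs by auto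
  then show ?case by simp
next
  case (Suc k)
  define S where "S = {cs. length cs = k \<and> set cs \<subseteq> W \<and> indep_list (bs @ cs)}"
  define g where "g = (\<lambda>(cs, x). cs @ [x :: ('F,'n) vec])"
  have finS: "finite S"
  proof -
    have "S \<subseteq> {xs. set xs \<subseteq> UNIV \<and> length xs = k}" unfolding S_def by auto
    then show ?thesis by (rule finite_subset) (rule finite_lists_length_eq, simp)
  qed
  have eq: "{cs. length cs = Suc k \<and> set cs \<subseteq> W \<and> indep_list (bs @ cs)}
      = g ` (SIGMA cs:S. W - vec.span (set (bs @ cs)))"
  proof (rule set_eqI, rule iffI)
    fix cs'
    assume "cs' \<in> {cs. length cs = Suc k \<and> set cs \<subseteq> W \<and> indep_list (bs @ cs)}"
    then have l: "length cs' = Suc k" and s: "set cs' \<subseteq> W" and i: "indep_list (bs @ cs')" by auto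
    obtain cs x where cs': "cs' = cs @ [x]" using l by (metis length_Suc_conv_rev)
    have "indep_list ((bs @ cs) @ [x])" using i cs' by simp
    then have "indep_list (bs @ cs)" "x \<notin> vec.span (set (bs @ cs))" unfolding indep_list_snoc by auto
    moreover have "length cs = k" "set cs \<subseteq> W" "x \<in> W" using l s cs' by auto
    ultimately have "(cs, x) \<in> (SIGMA cs:S. W - vec.span (set (bs @ cs)))" unfolding S_def by simp
    moreover have "cs' = g (cs, x)" unfolding g_def cs' by simp
    ultimately show "cs' \<in> g ` (SIGMA cs:S. W - vec.span (set (bs @ cs)))" by blast
  next
    fix cs'
    assume "cs' \<in> g ` (SIGMA cs:S. W - vec.span (set (bs @ cs)))"
    then obtain cs x where cs': "cs' = cs @ [x]" and csS: "cs \<in> S"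
      and x: "x \<in> W" "x \<notin> vec.span (set (bs @ cs))" unfolding g_def by auto
    have "indep_list ((bs @ cs) @ [x])" unfolding indep_list_snoc using csS x unfolding S_def by simp
    then show "cs' \<in> {cs. length cs = Suc k \<and> set cs \<subseteq> W \<and> indep_list (bs @ cs)}"
      using cs' csS x unfolding S_def by auto
  qed
  have inj: "inj_on g (SIGMA cs:S. W - vec.span (set (bs @ cs)))"
    unfolding g_def by (rule inj_onI) auto
  have each: "card (W - vec.span (set (bs @ cs))) = CARD('F) ^ vec.dim W - CARD('F) ^ (length bs + k)"
    if "cs \<in> S" for cs
  proof -
    have il: "indep_list (bs @ cs)" and sub: "set (bs @ cs) \<subseteq> W" and lc: "length cs = k"
      using that bs unfolding S_def by auto
    have spW: "vec.span (set (bs @ cs)) \<subseteq> W" using sub W vec.span_minimal by blast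
    have "card (vec.span (set (bs @ cs))) = CARD('F) ^ card (set (bs @ cs))"
      using il card_span_indep unfolding indep_list_def by blast
    also have "card (set (bs @ cs)) = length bs + k"
      using il lc distinct_card[of "bs @ cs"] unfolding indep_list_def by simp
    finally have c1: "card (vec.span (set (bs @ cs))) = CARD('F) ^ (length bs + k)" .
    have "card (W - vec.span (set (bs @ cs))) = card W - card (vec.span (set (bs @ cs)))"
      using spW by (simp add: card_Diff_subset)
    then show ?thesis using c1 card_subspace[OF W] by simp
  qed
  have "card {cs. length cs = Suc k \<and> set cs \<subseteq> W \<and> indep_list (bs @ cs)}
        = card (SIGMA cs:S. W - vec.span (set (bs @ cs)))"
    unfolding eq by (rule card_image[OF inj])
  also have "\<dots> = (\<Sum>cs\<in>S. card (W - vec.span (set (bs @ cs))))"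
    using finS by (simp add: card_SigmaI)
  also have "\<dots> = card S * (CARD('F) ^ vec.dim W - CARD('F) ^ (length bs + k))"
    using each by simp
  finally show ?case using Suc.IH unfolding S_def by (simp add: mult.commute)
qed

lemma deg1_root:
  fixes p :: "('F::field) poly"
  assumes "degree p = 1"
  shows "\<exists>t. poly p t = 0"
proof -
  have "p \<noteq> 0" using assms by auto
  then have "coeff p (degree p) \<noteq> 0" by simp
  then have c1: "coeff p 1 \<noteq> 0" using assms by simp
  obtain u v where uv: "u = coeff p 0" "v = coeff p 1" by blast
  have p: "p = [:u, v:]"
    by (rule poly_eqI) (auto simp: uv coeff_pCons coeff_eq_0 assms split: nat.split)
  have v0: "v \<noteq> 0" using c1 uv by simp
  have "poly p (- u / v) = 0" using v0 by (simp add: p)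
  then show ?thesis by blast
qed

lemma exists_irred_cubic:
  "\<exists>f :: ('F::{field,finite}) poly. degree f = 3 \<and> irreducible f"
proof -
  define r where "r = (\<lambda>(t::'F, d::'F, e::'F). [:- t, 1:] * [:e, d, 1:])"
  define m where "m = (\<lambda>(a::'F, b::'F, c::'F). [:c, b, a, 1:])"
  have injm: "inj m" unfolding m_def by (rule injI) auto
  have cm: "card (range m) = CARD('F) ^ 3"
    using card_image[OF injm] by (simp add: power3_eq_cube)
  have coll: "r (0, -1, 0) = r (1, 0, 0)" unfolding r_def by simp
  have ne: "(1::'F, 0::'F, 0::'F) \<noteq> (0, -1, 0)" by simp
  have "range r = r ` (UNIV - {(0, -1, 0)})"
  proof
    show "range r \<subseteq> r ` (UNIV - {(0, -1, 0)})"
    proof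
      fix y assume "y \<in> range r"
      then obtain z where z: "y = r z" by blast
      show "y \<in> r ` (UNIV - {(0, -1, 0)})"
      proof (cases "z = (0, -1, 0)")
        case True
        then have "y = r (1, 0, 0)" using z coll by simp
        then show ?thesis using ne by blast
      next
        case False then show ?thesis using z by blast
      qed
    qed
  qed auto
  then have "card (range r) \<le> card (UNIV - {(0::'F, -1::'F, 0::'F)})"
    by (metis card_image_le finite)
  also have "\<dots> = CARD('F) ^ 3 - 1" by (simp add: card_Diff_singleton power3_eq_cube)
  finally have cr0: "card (range r) \<le> CARD('F) ^ 3 - 1" .
  have "0 < CARD('F) ^ 3" by simp
  then have cr: "card (range r) < card (range m)" using cm cr0 by linarith
  have "\<not> range m \<subseteq> range r"
  proof
    assume "range m \<subseteq> range r"
    then have "card (range m) \<le> card (range r)" by (rule card_mono[rotated]) simp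
    then show False using cr by simp
  qed
  then obtain a b c where nm: "m (a, b, c) \<notin> range r" by auto
  define f where "f = [:c, b, a, 1:]"
  have fm: "f = m (a, b, c)" unfolding f_def m_def by simp
  have degf: "degree f = 3" unfolding f_def by simp
  have f0: "f \<noteq> 0" unfolding f_def by simp
  have noroot: "poly f t \<noteq> 0" for t
  proof
    assume "poly f t = 0"
    then obtain g where g: "f = [:- t, 1:] * g" by (auto simp: poly_eq_0_iff_dvd)
    have g0: "g \<noteq> 0" using g f0 by auto
    have dg: "degree g = 2" using degree_mult_eq[of "[:- t, 1:]" g] g0 g degf by simp
    have "lead_coeff f = coeff f 3" using degf by simp
    also have "coeff f 3 = 1" unfolding f_def by (simp add: numeral_3_eq_3)
    finally have lf: "lead_coeff f = 1" .
    have "lead_coeff ([:- t, 1:] * g) = lead_coeff g" by (simp only: lead_coeff_mult) simp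
    then have lg: "lead_coeff g = 1" using lf g by simp
    have "g = [:coeff g 0, coeff g 1, 1:]"
      by (rule poly_eqI) (use dg lg in \<open>auto simp: coeff_pCons coeff_eq_0 numeral_2_eq_2 split: nat.split\<close>)
    then obtain e d where gg: "g = [:e, d, 1:]" by blast
    have "r (t, d, e) = [:- t, 1:] * [:e, d, 1:]" unfolding r_def by simp
    then have "f = r (t, d, e)" by (simp only: g gg)
    then show False using nm fm by auto
  qed
  have "irreducible f"
  proof (rule irreducibleI)
    show "f \<noteq> 0" by (rule f0)
    show "\<not> f dvd 1" using is_unit_iff_degree[OF f0] degf by simp
    fix u v assume uv: "f = u * v"
    have u0: "u \<noteq> 0" and v0: "v \<noteq> 0" using uv f0 by auto
    have ds: "degree u + degree v = 3" using degree_mult_eq[OF u0 v0] uv degf by simp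
    show "u dvd 1 \<or> v dvd 1"
    proof (rule ccontr)
      assume "\<not> (u dvd 1 \<or> v dvd 1)"
      then have "degree u \<noteq> 0" "degree v \<noteq> 0"
        using is_unit_iff_degree[OF u0] is_unit_iff_degree[OF v0] by auto
      then have "degree u = 1 \<or> degree v = 1" using ds by linarith
      then obtain t where "poly u t = 0 \<or> poly v t = 0" using deg1_root by blast
      then have "poly f t = 0" using uv by auto
      then show False using noroot by blast
    qed
  qed
  then show ?thesis using degf by blast
qed

definition Cm :: "('F::field) poly \<Rightarrow> 'F poly \<Rightarrow> nat \<Rightarrow> nat \<Rightarrow> 'F" where
  "Cm f a i k = coeff ((a * monom 1 i) mod f) k"

lemma coeff_mod_high:
  fixes f p :: "('F::field) poly"
  assumes "f \<noteq> 0" "degree f \<le> k"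
  shows "coeff (p mod f) k = 0"
proof -
  have "p mod f = 0 \<or> degree (p mod f) < degree f" using degree_mod_less[OF assms(1)] by blast
  then show ?thesis using assms(2) by (auto intro: coeff_eq_0)
qed

lemma poly3_decomp:
  fixes x0 x1 x2 :: "'F::field"
  shows "[:x0, x1, x2:] = smult x0 (monom 1 0) + smult x1 (monom 1 1) + smult x2 (monom 1 2)"
  by (rule poly_eqI) (simp add: coeff_pCons coeff_monom split: nat.split)

lemma coeff_mulmod:
  fixes f a :: "('F::field) poly"
  shows "coeff ((a * [:x0, x1, x2:]) mod f) k = x0 * Cm f a 0 k + x1 * Cm f a 1 k + x2 * Cm f a 2 k"
proof -
  have "a * [:x0, x1, x2:] = smult x0 (a * monom 1 0) + smult x1 (a * monom 1 1) + smult x2 (a * monom 1 2)"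
    unfolding poly3_decomp by (simp add: algebra_simps)
  then have "(a * [:x0, x1, x2:]) mod f = smult x0 ((a * monom 1 0) mod f) + smult x1 ((a * monom 1 1) mod f)
      + smult x2 ((a * monom 1 2) mod f)"
    by (simp add: poly_mod_add_left mod_smult_left)
  then show ?thesis unfolding Cm_def by simp
qed

lemma K_inj:
  fixes f a a' :: "('F::field) poly"
  assumes f3: "degree f = 3" and irr: "irreducible f"
    and da: "degree a < 3" and da': "degree a' < 3" and ne: "a \<noteq> a'"
    and eq: "\<forall>k<3. x0 * Cm f a 0 k + x1 * Cm f a 1 k + x2 * Cm f a 2 k
                  = x0 * Cm f a' 0 k + x1 * Cm f a' 1 k + x2 * Cm f a' 2 k"
  shows "x0 = 0 \<and> x1 = 0 \<and> x2 = 0"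
proof -
  define X where "X = [:x0, x1, x2:]"
  have f0: "f \<noteq> 0" using f3 by auto
  have "(a * X) mod f = (a' * X) mod f"
  proof (rule poly_eqI)
    fix k
    show "coeff ((a * X) mod f) k = coeff ((a' * X) mod f) k"
    proof (cases "k < 3")
      case True then show ?thesis using eq unfolding X_def coeff_mulmod by blast
    next
      case False then show ?thesis using coeff_mod_high[OF f0] f3 by simp
    qed
  qed
  then have "((a - a') * X) mod f = 0" by (simp add: algebra_simps poly_mod_diff_left)
  then have dv: "f dvd (a - a') * X" by (simp add: mod_eq_0_iff_dvd)
  have pf: "prime_elem f" using irr by (rule field_poly_irreducible_imp_prime)
  have "\<not> f dvd (a - a')"
  proof
    assume "f dvd (a - a')"
    moreover have "a - a' \<noteq> 0" using ne by simp
    ultimately have "degree f \<le> degree (a - a')" by (rule dvd_imp_degree_le)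
    moreover have "degree (a - a') < 3" using degree_diff_le_max[of a a'] da da' by linarith
    ultimately show False using f3 by simp
  qed
  then have "f dvd X" using dv prime_elem_dvd_mult_iff[OF pf] by blast
  have dX: "degree X \<le> 2" unfolding X_def by (rule degree_le) (simp add: coeff_pCons split: nat.split)
  have "X = 0"
  proof (rule ccontr)
    assume "X \<noteq> 0"
    then have "degree f \<le> degree X" using \<open>f dvd X\<close> dvd_imp_degree_le by blast
    then show False using dX f3 by simp
  qed
  then show ?thesis unfolding X_def by simp
qed

definition shear :: "(nat \<Rightarrow> nat \<Rightarrow> 'F::field) \<Rightarrow> ('F^'n) list \<Rightarrow> ('F^'n) list" where
  "shear c bs = [bs!0 + c 0 0 *s bs!3 + c 0 1 *s bs!4 + c 0 2 *s bs!5,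
                 bs!1 + c 1 0 *s bs!3 + c 1 1 *s bs!4 + c 1 2 *s bs!5,
                 bs!2 + c 2 0 *s bs!3 + c 2 1 *s bs!4 + c 2 2 *s bs!5,
                 bs!3, bs!4, bs!5]"

definition swap3 :: "'a list \<Rightarrow> 'a list" where
  "swap3 bs = [bs!3, bs!4, bs!5, bs!0, bs!1, bs!2]"

lemma list6: "length bs = 6 \<Longrightarrow> \<exists>b0 b1 b2 b3 b4 b5. bs = [b0, b1, b2, b3, b4, b5]"
  by (auto simp: numeral_eq_Suc length_Suc_conv)

lemma span3: "vec.span {u0, u1, u2} = {x0 *s u0 + x1 *s u1 + x2 *s u2 | x0 x1 x2. True}"
proof (rule set_eqI)
  fix v
  show "v \<in> vec.span {u0, u1, u2} \<longleftrightarrow> v \<in> {x0 *s u0 + x1 *s u1 + x2 *s u2 | x0 x1 x2. True}"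
  proof
    assume "v \<in> vec.span {u0, u1, u2}"
    then obtain k0 where "v - k0 *s u0 \<in> vec.span {u1, u2}" using vec.span_insert[of u0 "{u1, u2}"] by blast
    then obtain k1 where "v - k0 *s u0 - k1 *s u1 \<in> vec.span {u2}" using vec.span_insert[of u1 "{u2}"] by blast
    then obtain k2 where "v - k0 *s u0 - k1 *s u1 - k2 *s u2 \<in> vec.span {}" using vec.span_insert[of u2 "{}"] by blast
    then have "v - k0 *s u0 - k1 *s u1 - k2 *s u2 = 0" by (simp add: vec.span_empty)
    then have "v = k0 *s u0 + k1 *s u1 + k2 *s u2" by (simp add: algebra_simps)
    then show "v \<in> {x0 *s u0 + x1 *s u1 + x2 *s u2 | x0 x1 x2. True}" by blast
  next
    assume "v \<in> {x0 *s u0 + x1 *s u1 + x2 *s u2 | x0 x1 x2. True}"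
    then obtain x0 x1 x2 where "v = x0 *s u0 + x1 *s u1 + x2 *s u2" by blast
    then show "v \<in> vec.span {u0, u1, u2}"
      by (simp add: vec.span_add vec.span_scale vec.span_base)
  qed
qed

lemma indep6:
  assumes "indep_list [b0, b1, b2, b3, b4, b5 :: ('F::field)^'n]"
    and "c0 *s b0 + c1 *s b1 + c2 *s b2 + c3 *s b3 + c4 *s b4 + c5 *s b5 = 0"
  shows "c0 = 0 \<and> c1 = 0 \<and> c2 = 0 \<and> c3 = 0 \<and> c4 = 0 \<and> c5 = 0"
proof -
  have d: "distinct [b0, b1, b2, b3, b4, b5]" and i: "vec.independent {b0, b1, b2, b3, b4, b5}"
    using assms(1) unfolding indep_list_def by auto
  have ne: "b0 \<noteq> b1" "b0 \<noteq> b2" "b0 \<noteq> b3" "b0 \<noteq> b4" "b0 \<noteq> b5" "b1 \<noteq> b2" "b1 \<noteq> b3"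
    "b1 \<noteq> b4" "b1 \<noteq> b5" "b2 \<noteq> b3" "b2 \<noteq> b4" "b2 \<noteq> b5" "b3 \<noteq> b4" "b3 \<noteq> b5" "b4 \<noteq> b5"
    using d by auto
  define u where "u = (\<lambda>v. if v = b0 then c0 else if v = b1 then c1 else if v = b2 then c2
     else if v = b3 then c3 else if v = b4 then c4 else c5)"
  have "(\<Sum>v\<in>{b0, b1, b2, b3, b4, b5}. u v *s v) = c0 *s b0 + c1 *s b1 + c2 *s b2 + c3 *s b3 + c4 *s b4 + c5 *s b5"
    unfolding u_def using ne by (simp add: ne[symmetric] algebra_simps)
  then have "\<forall>v\<in>{b0, b1, b2, b3, b4, b5}. u v = 0"
    using i assms(2) unfolding vec.independent_explicit by auto
  then show ?thesis unfolding u_def using ne by (simp add: ne[symmetric])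
qed

definition frames :: "(('F::field)^'n) set \<Rightarrow> ('F^'n) list set" where
  "frames H = {bs. length bs = 6 \<and> set bs \<subseteq> H \<and> indep_list bs}"

lemma shear_span:
  assumes "length ys = 6"
  shows "set (shear c ys) \<subseteq> vec.span (set ys)"
proof -
  obtain b0 b1 b2 b3 b4 b5 where ys: "ys = [b0, b1, b2, b3, b4, b5]" using list6[OF assms] by blast
  show ?thesis unfolding ys shear_def
    by (simp add: vec.span_add vec.span_scale vec.span_base)
qed

lemma shear_inv:
  assumes "length bs = 6" "\<forall>i k. c' i k = - c i k"
  shows "shear c' (shear c bs) = bs"
proof -
  obtain b0 b1 b2 b3 b4 b5 where ys: "bs = [b0, b1, b2, b3, b4, b5]" using list6[OF assms(1)] by blast
  show ?thesis unfolding ys shear_def using assms(2) by (simp add: vec.scale_minus_left)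
qed

lemma length_shear[simp]: "length (shear c bs) = 6" by (simp add: shear_def)
lemma length_swap3[simp]: "length (swap3 bs) = 6" by (simp add: swap3_def)

lemma swap3_inv: "length bs = 6 \<Longrightarrow> swap3 (swap3 bs) = bs"
  using list6[of bs] by (auto simp: swap3_def)

lemma set_swap3: "length bs = 6 \<Longrightarrow> set (swap3 bs) = set bs"
  using list6[of bs] by (auto simp: swap3_def)

lemma frame_span:
  assumes H: "vec.subspace H" "vec.dim H = 6" and bs: "bs \<in> frames H"
  shows "vec.span (set bs) = H"
proof -
  have l: "length bs = 6" and s: "set bs \<subseteq> H" and i: "indep_list bs" using bs unfolding frames_def by auto
  have c: "card (set bs) = 6" using i l unfolding indep_list_def by (simp add: distinct_card)
  have "H \<subseteq> vec.span (set bs)"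
    using i s c H(2) unfolding indep_list_def by (intro vec.card_ge_dim_independent) auto
  moreover have "vec.span (set bs) \<subseteq> H" using s H(1) vec.span_minimal by blast
  ultimately show ?thesis by blast
qed

lemma frame_transfer:
  assumes H: "vec.subspace H" "vec.dim H = 6" and bs: "bs \<in> frames H"
    and ys: "length ys = 6" "set ys \<subseteq> H" "set bs \<subseteq> vec.span (set ys)"
  shows "ys \<in> frames H"
proof -
  have "vec.span (set bs) \<subseteq> vec.span (set ys)" using ys(3) vec.span_minimal vec.subspace_span by blast
  then have Hs: "H \<subseteq> vec.span (set ys)" using frame_span[OF H bs] by simp
  have "6 \<le> card (set ys)" using vec.dim_le_card[OF Hs] H(2) by simp
  moreover have "card (set ys) \<le> 6" using card_length[of ys] ys(1) by simp
  ultimately have c: "card (set ys) = 6" by simp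
  then have d: "distinct ys" using ys(1) card_distinct by metis
  have "vec.independent (set ys)"
    using ys(2) Hs c H(2) by (intro vec.card_le_dim_spanning[of _ H]) auto
  then show ?thesis using d ys unfolding frames_def indep_list_def by auto
qed

lemma shear_frames:
  assumes H: "vec.subspace H" "vec.dim H = 6" and bs: "bs \<in> frames H"
  shows "shear c bs \<in> frames H"
proof -
  have l: "length bs = 6" and s: "set bs \<subseteq> H" using bs unfolding frames_def by auto
  have "set (shear c bs) \<subseteq> H"
    using shear_span[OF l, of c] vec.span_minimal[OF s H(1)] by blast
  moreover have "set bs \<subseteq> vec.span (set (shear c bs))"
    using shear_span[of "shear c bs" "\<lambda>i k. - c i k"] shear_inv[OF l, of "\<lambda>i k. - c i k" c] by simp
  ultimately show ?thesis using frame_transfer[OF H bs] by simp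
qed

lemma swap3_frames:
  assumes "bs \<in> frames H"
  shows "swap3 bs \<in> frames H"
proof -
  have l: "length bs = 6" using assms unfolding frames_def by auto
  obtain b0 b1 b2 b3 b4 b5 where ys: "bs = [b0, b1, b2, b3, b4, b5]" using list6[OF l] by blast
  have se: "set (swap3 bs) = set bs" by (rule set_swap3[OF l])
  have "distinct (swap3 bs)" using assms unfolding ys swap3_def frames_def indep_list_def by auto
  then show ?thesis using assms se unfolding frames_def indep_list_def by simp
qed

lemma bij_shear:
  assumes H: "vec.subspace H" "vec.dim H = 6"
  shows "bij_betw (shear c) (frames H) (frames H)"
proof (rule bij_betw_byWitness[where f'="shear (\<lambda>i k. - c i k)"])
  show "\<forall>a\<in>frames H. shear (\<lambda>i k. - c i k) (shear c a) = a"
    by (auto simp: frames_def intro: shear_inv)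
  show "\<forall>a'\<in>frames H. shear c (shear (\<lambda>i k. - c i k) a') = a'"
    by (auto simp: frames_def intro: shear_inv)
  show "shear c ` frames H \<subseteq> frames H" using shear_frames[OF H] by blast
  show "shear (\<lambda>i k. - c i k) ` frames H \<subseteq> frames H" using shear_frames[OF H] by blast
qed

lemma bij_swap3:
  shows "bij_betw swap3 (frames H) (frames H)"
proof (rule bij_betw_byWitness[where f'="swap3"])
  show "\<forall>a\<in>frames H. swap3 (swap3 a) = a" by (auto simp: frames_def intro: swap3_inv)
  then show "\<forall>a\<in>frames H. swap3 (swap3 a) = a" .
  show "swap3 ` frames H \<subseteq> frames H" using swap3_frames by blast
  then show "swap3 ` frames H \<subseteq> frames H" .
qed

definition T3 :: "(('F::field)^'n) list \<Rightarrow> ('F^'n) set" where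
  "T3 ys = vec.span (set (take 3 ys))"

lemma disj_shear:
  fixes bs :: "(('F::field)^'n) list"
  assumes "indep_list bs" "length bs = 6"
    and hyp: "\<forall>x0 x1 x2. (\<forall>k<3. x0 * c 0 k + x1 * c 1 k + x2 * c 2 k = x0 * c' 0 k + x1 * c' 1 k + x2 * c' 2 k)
               \<longrightarrow> x0 = 0 \<and> x1 = 0 \<and> x2 = 0"
  shows "T3 (shear c bs) \<inter> T3 (shear c' bs) = {0}"
proof -
  obtain b0 b1 b2 b3 b4 b5 where bs: "bs = [b0, b1, b2, b3, b4, b5]" using list6[OF assms(2)] by blast
  have il: "indep_list [b0, b1, b2, b3, b4, b5]" using assms(1) bs by simp
  have "v = 0" if v1: "v \<in> T3 (shear c bs)" and v2: "v \<in> T3 (shear c' bs)" for v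
  proof -
    obtain x0 x1 x2 where vx: "v = x0 *s (b0 + c 0 0 *s b3 + c 0 1 *s b4 + c 0 2 *s b5)
       + x1 *s (b1 + c 1 0 *s b3 + c 1 1 *s b4 + c 1 2 *s b5) + x2 *s (b2 + c 2 0 *s b3 + c 2 1 *s b4 + c 2 2 *s b5)"
      using v1 unfolding T3_def bs shear_def by (auto simp: span3)
    obtain y0 y1 y2 where vy: "v = y0 *s (b0 + c' 0 0 *s b3 + c' 0 1 *s b4 + c' 0 2 *s b5)
       + y1 *s (b1 + c' 1 0 *s b3 + c' 1 1 *s b4 + c' 1 2 *s b5) + y2 *s (b2 + c' 2 0 *s b3 + c' 2 1 *s b4 + c' 2 2 *s b5)"
      using v2 unfolding T3_def bs shear_def by (auto simp: span3)
    have "(x0 - y0) *s b0 + (x1 - y1) *s b1 + (x2 - y2) *s b2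
      + (x0 * c 0 0 + x1 * c 1 0 + x2 * c 2 0 - (y0 * c' 0 0 + y1 * c' 1 0 + y2 * c' 2 0)) *s b3
      + (x0 * c 0 1 + x1 * c 1 1 + x2 * c 2 1 - (y0 * c' 0 1 + y1 * c' 1 1 + y2 * c' 2 1)) *s b4
      + (x0 * c 0 2 + x1 * c 1 2 + x2 * c 2 2 - (y0 * c' 0 2 + y1 * c' 1 2 + y2 * c' 2 2)) *s b5 = v - v"
      apply (subst (2) vy) apply (subst vx)
      by (simp add: vec_eq_iff algebra_simps)
    then have z: "x0 - y0 = 0 \<and> x1 - y1 = 0 \<and> x2 - y2 = 0
      \<and> x0 * c 0 0 + x1 * c 1 0 + x2 * c 2 0 - (y0 * c' 0 0 + y1 * c' 1 0 + y2 * c' 2 0) = 0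
      \<and> x0 * c 0 1 + x1 * c 1 1 + x2 * c 2 1 - (y0 * c' 0 1 + y1 * c' 1 1 + y2 * c' 2 1) = 0
      \<and> x0 * c 0 2 + x1 * c 1 2 + x2 * c 2 2 - (y0 * c' 0 2 + y1 * c' 1 2 + y2 * c' 2 2) = 0"
      using indep6[OF il] unfolding diff_self by blast
    then have "\<forall>k<3. x0 * c 0 k + x1 * c 1 k + x2 * c 2 k = x0 * c' 0 k + x1 * c' 1 k + x2 * c' 2 k"
      by (auto simp: less_Suc_eq numeral_3_eq_3 numeral_2_eq_2)
    then have "x0 = 0 \<and> x1 = 0 \<and> x2 = 0" using hyp by blast
    then show "v = 0" using vx by simp
  qed
  moreover have "0 \<in> T3 (shear c bs)" "0 \<in> T3 (shear c' bs)" unfolding T3_def by (auto simp: vec.span_zero)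
  ultimately show ?thesis by blast
qed

lemma disj_none:
  fixes bs :: "(('F::field)^'n) list"
  assumes "indep_list bs" "length bs = 6"
  shows "T3 (shear c bs) \<inter> T3 (swap3 bs) = {0}"
proof -
  obtain b0 b1 b2 b3 b4 b5 where bs: "bs = [b0, b1, b2, b3, b4, b5]" using list6[OF assms(2)] by blast
  have il: "indep_list [b0, b1, b2, b3, b4, b5]" using assms(1) bs by simp
  have "v = 0" if v1: "v \<in> T3 (shear c bs)" and v2: "v \<in> T3 (swap3 bs)" for v
  proof -
    obtain x0 x1 x2 where vx: "v = x0 *s (b0 + c 0 0 *s b3 + c 0 1 *s b4 + c 0 2 *s b5)
       + x1 *s (b1 + c 1 0 *s b3 + c 1 1 *s b4 + c 1 2 *s b5) + x2 *s (b2 + c 2 0 *s b3 + c 2 1 *s b4 + c 2 2 *s b5)"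
      using v1 unfolding T3_def bs shear_def by (auto simp: span3)
    obtain y0 y1 y2 where vy: "v = y0 *s b3 + y1 *s b4 + y2 *s b5"
      using v2 unfolding T3_def bs swap3_def by (auto simp: span3)
    have "x0 *s b0 + x1 *s b1 + x2 *s b2
      + (x0 * c 0 0 + x1 * c 1 0 + x2 * c 2 0 - y0) *s b3
      + (x0 * c 0 1 + x1 * c 1 1 + x2 * c 2 1 - y1) *s b4
      + (x0 * c 0 2 + x1 * c 1 2 + x2 * c 2 2 - y2) *s b5 = v - v"
      apply (subst (2) vy) apply (subst vx)
      by (simp add: vec_eq_iff algebra_simps)
    then have "x0 = 0 \<and> x1 = 0 \<and> x2 = 0" using indep6[OF il] unfolding diff_self by blast
    then show "v = 0" using vx by simp
  qed
  moreover have "0 \<in> T3 (shear c bs)" "0 \<in> T3 (swap3 bs)" unfolding T3_def by (auto simp: vec.span_zero)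
  ultimately show ?thesis by blast
qed

definition transf :: "('F::field) poly \<Rightarrow> 'F poly option \<Rightarrow> ('F^'n) list \<Rightarrow> ('F^'n) list" where
  "transf f j bs = (case j of None \<Rightarrow> swap3 bs | Some a \<Rightarrow> shear (Cm f a) bs)"

definition Kset :: "('F::field) poly set" where "Kset = {p. degree p < 3}"

definition Jset :: "('F::field) poly option set" where "Jset = insert None (Some ` Kset)"

lemma card_Kset: "card (Kset :: ('F::{field,finite}) poly set) = CARD('F) ^ 3"
proof -
  define g where "g = (\<lambda>(a::'F, b::'F, c::'F). [:a, b, c:])"
  have inj: "inj g" unfolding g_def by (rule injI) auto
  have "Kset = range g"
  proof (rule set_eqI, rule iffI)
    fix p :: "'F poly" assume "p \<in> Kset"
    then have dp: "degree p < 3" unfolding Kset_def by simp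
    have "p = [:coeff p 0, coeff p 1, coeff p 2:]"
      by (rule poly_eqI) (use dp in \<open>auto simp: coeff_pCons coeff_eq_0 numeral_2_eq_2 split: nat.split\<close>)
    then have "p = g (coeff p 0, coeff p 1, coeff p 2)" unfolding g_def by simp
    then show "p \<in> range g" by blast
  next
    fix p :: "'F poly" assume "p \<in> range g"
    then obtain a b c where "p = [:a, b, c:]" unfolding g_def by auto
    moreover have "degree [:a, b, c:] \<le> 2" by (rule degree_le) (simp add: coeff_pCons split: nat.split)
    ultimately show "p \<in> Kset" unfolding Kset_def by simp
  qed
  then show ?thesis using card_image[OF inj] by (simp add: power3_eq_cube)
qed

lemma finite_Kset: "finite (Kset :: ('F::{field,finite}) poly set)"
  using card_Kset[where 'F='F] by (intro card_ge_0_finite) simp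

lemma card_Jset: "card (Jset :: ('F::{field,finite}) poly option set) = CARD('F) ^ 3 + 1"
proof -
  have "card (Some ` (Kset :: 'F poly set)) = CARD('F) ^ 3"
    using card_Kset[where 'F='F] by (simp add: card_image)
  moreover have "finite (Some ` (Kset :: 'F poly set))" by (rule finite_imageI[OF finite_Kset])
  ultimately show ?thesis unfolding Jset_def by simp
qed

lemma bij_transf:
  assumes H: "vec.subspace H" "vec.dim H = 6"
  shows "bij_betw (transf f j) (frames H) (frames H)"
proof (cases j)
  case None then show ?thesis using bij_swap3 unfolding transf_def by simp
next
  case (Some a) then show ?thesis using bij_shear[OF H] unfolding transf_def by simp
qed

lemma disj_transf:
  fixes f :: "('F::field) poly"
  assumes f3: "degree f = 3" and irr: "irreducible f"
    and bs: "indep_list bs" "length bs = 6"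
    and j: "j1 \<in> Jset" "j2 \<in> Jset" "j1 \<noteq> j2"
  shows "T3 (transf f j1 bs) \<inter> T3 (transf f j2 bs) = {0}"
proof (cases j1)
  case None
  then obtain a where j2: "j2 = Some a" using j by (cases j2) auto
  show ?thesis using disj_none[OF bs, of "Cm f a"] None j2 unfolding transf_def by (simp add: Int_commute)
next
  case (Some a)
  show ?thesis
  proof (cases j2)
    case None
    show ?thesis using disj_none[OF bs, of "Cm f a"] None Some unfolding transf_def by simp
  next
    case (Some a')
    have da: "degree a < 3" "degree a' < 3" "a \<noteq> a'"
      using j \<open>j1 = Some a\<close> Some unfolding Jset_def Kset_def by auto
    have hyp: "\<forall>x0 x1 x2. (\<forall>k<3. x0 * Cm f a 0 k + x1 * Cm f a 1 k + x2 * Cm f a 2 k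
        = x0 * Cm f a' 0 k + x1 * Cm f a' 1 k + x2 * Cm f a' 2 k) \<longrightarrow> x0 = 0 \<and> x1 = 0 \<and> x2 = 0"
      using K_inj[OF f3 irr da] by blast
    show ?thesis using disj_shear[OF bs hyp] \<open>j1 = Some a\<close> Some unfolding transf_def by simp
  qed
qed

lemma card_filter_bij:
  assumes "bij_betw g A A"
  shows "card {x\<in>A. Q (g x)} = card {x\<in>A. Q x}"
proof -
  have "g ` {x\<in>A. Q (g x)} = {x\<in>A. Q x}"
    using assms unfolding bij_betw_def by auto
  moreover have "inj_on g {x\<in>A. Q (g x)}"
    using assms unfolding bij_betw_def by (auto intro: inj_on_subset)
  ultimately show ?thesis using card_image by metis
qed

lemma double_count:
  assumes "finite A" "finite B"
  shows "(\<Sum>a\<in>A. card {b\<in>B. P a b}) = (\<Sum>b\<in>B. card {a\<in>A. P a b})"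
proof -
  have e: "card {x\<in>X. R x} = (\<Sum>x\<in>X. if R x then 1 else 0)" if "finite X" for X and R :: "_ \<Rightarrow> bool"
    unfolding card_eq_sum using that by (rule sum.inter_filter)
  show ?thesis using assms by (simp add: e sum.swap[of _ A B])
qed

lemma fiber_count:
  assumes "finite A" "finite I"
  shows "card {x\<in>A. g x \<in> I} = (\<Sum>U\<in>I. card {x\<in>A. g x = U})"
proof -
  have "{x\<in>A. g x \<in> I} = (\<Union>U\<in>I. {x\<in>A. g x = U})" by auto
  also have "card \<dots> = (\<Sum>U\<in>I. card {x\<in>A. g x = U})"
    using assms by (intro card_UN_disjoint) auto
  finally show ?thesis .
qed

lemma indep_list_Nil[simp]: "indep_list []"
  unfolding indep_list_def by (simp add: vec.independent_empty)

lemma card_frames: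
  fixes H :: "(('F::{field,finite})^'n) set"
  assumes "vec.subspace H" "vec.dim H = 6"
  shows "card (frames H) = (\<Prod>i<6. CARD('F) ^ 6 - CARD('F) ^ i)"
proof -
  have "frames H = {cs. length cs = 6 \<and> set cs \<subseteq> H \<and> indep_list ([] @ cs)}"
    unfolding frames_def by simp
  then show ?thesis using count_ext[OF assms(1), of "[]" 6] assms(2) by simp
qed

lemma finite_lists_n: "finite {xs :: ('a::finite) list. length xs = n}"
  using finite_lists_length_eq[of "UNIV :: 'a set" n] by simp

lemma count_T3:
  fixes H U :: "(('F::{field,finite})^'n) set"
  assumes H: "vec.subspace H" "vec.dim H = 6"
    and U: "vec.subspace U" "vec.dim U = 3" "U \<subseteq> H"
  shows "card {bs \<in> frames H. T3 bs = U}
       = (\<Prod>i<3. CARD('F) ^ 3 - CARD('F) ^ i) * (\<Prod>i<3. CARD('F) ^ 6 - CARD('F) ^ (3 + i))"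
proof -
  define A where "A = {xs. length xs = 3 \<and> set xs \<subseteq> U \<and> indep_list ([] @ xs)}"
  define B where "B = (\<lambda>xs. {ys. length ys = 3 \<and> set ys \<subseteq> H \<and> indep_list (xs @ ys)})"
  define g where "g = (\<lambda>(xs :: ('F^'n) list, ys :: ('F^'n) list). xs @ ys)"
  have spanA: "vec.span (set xs) = U" if "xs \<in> A" for xs
  proof -
    have l: "length xs = 3" and s: "set xs \<subseteq> U" and i: "indep_list xs" using that unfolding A_def by auto
    have c: "card (set xs) = 3" using i l unfolding indep_list_def by (simp add: distinct_card)
    have "U \<subseteq> vec.span (set xs)"
      using i s c U(2) unfolding indep_list_def by (intro vec.card_ge_dim_independent) auto
    moreover have "vec.span (set xs) \<subseteq> U" using s U(1) vec.span_minimal by blast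
    ultimately show ?thesis by blast
  qed
  have eq: "{bs \<in> frames H. T3 bs = U} = g ` (SIGMA xs:A. B xs)"
  proof (rule set_eqI, rule iffI)
    fix bs assume "bs \<in> {bs \<in> frames H. T3 bs = U}"
    then have l: "length bs = 6" and s: "set bs \<subseteq> H" and i: "indep_list bs" and t: "T3 bs = U"
      unfolding frames_def by auto
    define xs where "xs = take 3 bs"
    define ys where "ys = drop 3 bs"
    have bsd: "bs = xs @ ys" unfolding xs_def ys_def by simp
    have ixs: "indep_list xs" using i unfolding indep_list_def xs_def
      by (meson distinct_take set_take_subset vec.independent_mono)
    have "set xs \<subseteq> U" using t unfolding T3_def xs_def using vec.span_base by blast
    then have "xs \<in> A" using ixs l unfolding A_def xs_def by simp
    moreover have "ys \<in> B xs"
    proof -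
      have "length ys = 3" using l unfolding ys_def by simp
      moreover have "set ys \<subseteq> H" using s set_drop_subset[of 3 bs] unfolding ys_def by blast
      moreover have "indep_list (xs @ ys)" using i bsd by simp
      ultimately show ?thesis unfolding B_def by blast
    qed
    ultimately have "(xs, ys) \<in> (SIGMA xs:A. B xs)" by blast
    moreover have "bs = g (xs, ys)" unfolding g_def using bsd by simp
    ultimately show "bs \<in> g ` (SIGMA xs:A. B xs)" by blast
  next
    fix bs assume "bs \<in> g ` (SIGMA xs:A. B xs)"
    then obtain xs ys where bs: "bs = xs @ ys" and xA: "xs \<in> A" and yB: "ys \<in> B xs"
      unfolding g_def by auto
    have lx: "length xs = 3" "set xs \<subseteq> U" using xA unfolding A_def by auto
    have ly: "length ys = 3" "set ys \<subseteq> H" "indep_list (xs @ ys)" using yB unfolding B_def by auto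
    have "length bs = 6" using lx ly unfolding bs by simp
    moreover have "set bs \<subseteq> H" using lx ly U(3) unfolding bs by auto
    moreover have "indep_list bs" using ly unfolding bs by simp
    moreover have "T3 bs = U" using spanA[OF xA] xA unfolding T3_def bs A_def by simp
    ultimately show "bs \<in> {bs \<in> frames H. T3 bs = U}" unfolding frames_def by simp
  qed
  have inj: "inj_on g (SIGMA xs:A. B xs)"
    unfolding g_def A_def by (rule inj_onI) auto
  have finA: "finite A"
    by (rule finite_subset[OF _ finite_lists_n[of 3]]) (auto simp: A_def)
  have cB: "card (B xs) = (\<Prod>i<3. CARD('F) ^ 6 - CARD('F) ^ (3 + i))" if "xs \<in> A" for xs
  proof -
    have "indep_list xs" "set xs \<subseteq> H" "length xs = 3" using that U(3) unfolding A_def by auto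
    then show ?thesis using count_ext[OF H(1), of xs 3] H(2) unfolding B_def by simp
  qed
  have cA: "card A = (\<Prod>i<3. CARD('F) ^ 3 - CARD('F) ^ i)"
    using count_ext[OF U(1), of "[]" 3] U(2) unfolding A_def by simp
  have "card {bs \<in> frames H. T3 bs = U} = card (SIGMA xs:A. B xs)"
    unfolding eq by (rule card_image[OF inj])
  also have "\<dots> = (\<Sum>xs\<in>A. card (B xs))"
  proof (rule card_SigmaI[OF finA], rule ballI)
    fix xs assume "xs \<in> A"
    show "finite (B xs)" by (rule finite_subset[OF _ finite_lists_n[of 3]]) (auto simp: B_def)
  qed
  also have "\<dots> = card A * (\<Prod>i<3. CARD('F) ^ 6 - CARD('F) ^ (3 + i))" using cB by simp
  finally show ?thesis using cA by simp
qed

lemma arith_ekr: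
  fixes q :: nat
  assumes q: "q \<ge> 2"
  shows "(\<Prod>i<6. q ^ 6 - q ^ i) = (q^3 + 1) * ((q^4 + q^3 + q^2 + q + 1) * (q^2 + 1))
           * ((\<Prod>i<3. q ^ 3 - q ^ i) * (\<Prod>i<3. q ^ 6 - q ^ (3 + i)))"
    and "0 < (\<Prod>i<3. q ^ 3 - q ^ i) * (\<Prod>i<3. q ^ 6 - q ^ (3 + i))"
proof -
  have h: "int (q ^ n - q ^ i) = int q ^ n - int q ^ i" if "i \<le> n" for i n
  proof -
    have "q ^ i \<le> q ^ n" using q that by (intro power_increasing) auto
    then show ?thesis by (simp add: of_nat_diff)
  qed
  have lt: "q ^ i < q ^ n" if "i < n" for i n using q that by (intro power_strict_increasing) auto
  define Q where "Q = int q"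
  have qQ: "int q = Q" unfolding Q_def by simp
  have p1: "int (\<Prod>i<3. q ^ 3 - q ^ i) = (\<Prod>i<3. Q ^ 3 - Q ^ i)"
    unfolding of_nat_prod Q_def by (rule prod.cong) (auto simp: h)
  have p2: "int (\<Prod>i<3. q ^ 6 - q ^ (3 + i)) = (\<Prod>i<3. Q ^ 6 - Q ^ (3 + i))"
    unfolding of_nat_prod Q_def by (rule prod.cong) (auto simp: h)
  have "int (\<Prod>i<6. q ^ 6 - q ^ i) = (\<Prod>i<6. Q ^ 6 - Q ^ i)"
    unfolding of_nat_prod Q_def by (rule prod.cong) (auto simp: h)
  also have "\<dots> = (Q^3 + 1) * ((Q^4 + Q^3 + Q^2 + Q + 1) * (Q^2 + 1))
           * ((\<Prod>i<3. Q ^ 3 - Q ^ i) * (\<Prod>i<3. Q ^ 6 - Q ^ (3 + i)))"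
    by (simp add: eval_nat_numeral) algebra
  also have "\<dots> = int ((q^3 + 1) * ((q^4 + q^3 + q^2 + q + 1) * (q^2 + 1))
           * ((\<Prod>i<3. q ^ 3 - q ^ i) * (\<Prod>i<3. q ^ 6 - q ^ (3 + i))))"
    by (simp only: of_nat_mult of_nat_add of_nat_power of_nat_1 p1 p2 qQ of_nat_numeral)
  finally show "(\<Prod>i<6. q ^ 6 - q ^ i) = (q^3 + 1) * ((q^4 + q^3 + q^2 + q + 1) * (q^2 + 1))
           * ((\<Prod>i<3. q ^ 3 - q ^ i) * (\<Prod>i<3. q ^ 6 - q ^ (3 + i)))" by (simp only: of_nat_eq_iff)
  show "0 < (\<Prod>i<3. q ^ 3 - q ^ i) * (\<Prod>i<3. q ^ 6 - q ^ (3 + i))"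
    using lt by (auto intro!: prod_pos)
qed

lemma card_field_ge2: "2 \<le> CARD('F::{field,finite})"
proof -
  have "card {0::'F, 1} = 2" by simp
  moreover have "card {0::'F, 1} \<le> CARD('F)" by (rule card_mono) auto
  ultimately show ?thesis by simp
qed

theorem ekr:
  fixes H :: "(('F::{field,finite})^'n) set" and I :: "('F^'n) set set"
  assumes H: "vec.subspace H" "vec.dim H = 6"
    and IU: "\<forall>U\<in>I. vec.subspace U \<and> vec.dim U = 3 \<and> U \<subseteq> H"
    and Iint: "\<forall>U\<in>I. \<forall>V\<in>I. U \<inter> V \<noteq> {0}"
  shows "card I \<le> (CARD('F)^4 + CARD('F)^3 + CARD('F)^2 + CARD('F) + 1) * (CARD('F)^2 + 1)"
proof -
  define q where "q = CARD('F)"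
  have q2: "q \<ge> 2" unfolding q_def by (rule card_field_ge2)
  obtain f :: "'F poly" where f3: "degree f = 3" and irr: "irreducible f"
    using exists_irred_cubic by blast
  define Fr where "Fr = frames H"
  define c0 where "c0 = (\<Prod>i<3. q ^ 3 - q ^ i) * (\<Prod>i<3. q ^ 6 - q ^ (3 + i))"
  define G where "G = (q^4 + q^3 + q^2 + q + 1) * (q^2 + 1)"
  define P where "P = (\<lambda>bs j. T3 (transf f j bs) \<in> I)"
  have finFr: "finite Fr" unfolding Fr_def frames_def
    by (rule finite_subset[OF _ finite_lists_n[of 6]]) auto
  have finJ: "finite (Jset :: 'F poly option set)" unfolding Jset_def
    by (rule finite.insertI, rule finite_imageI, rule finite_Kset)
  have finI: "finite I" by (rule finite_subset[OF subset_UNIV]) simp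
  have le1: "card {j\<in>Jset. P bs j} \<le> 1" if bs: "bs \<in> Fr" for bs
  proof -
    have ib: "indep_list bs" "length bs = 6" using bs unfolding Fr_def frames_def by auto
    have "\<forall>j1\<in>{j\<in>Jset. P bs j}. \<forall>j2\<in>{j\<in>Jset. P bs j}. j1 = j2"
    proof (intro ballI, rule ccontr)
      fix j1 j2 assume j1: "j1 \<in> {j\<in>Jset. P bs j}" and j2: "j2 \<in> {j\<in>Jset. P bs j}" and ne: "j1 \<noteq> j2"
      have "T3 (transf f j1 bs) \<inter> T3 (transf f j2 bs) = {0}"
        using disj_transf[OF f3 irr ib _ _ ne] j1 j2 by blast
      moreover have "T3 (transf f j1 bs) \<inter> T3 (transf f j2 bs) \<noteq> {0}"
        using Iint j1 j2 unfolding P_def by blast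
      ultimately show False by blast
    qed
    moreover have "finite {j\<in>Jset. P bs j}" using finJ by simp
    ultimately have "card {j\<in>Jset. P bs j} \<le> Suc 0" using card_le_Suc0_iff_eq by blast
    then show ?thesis by simp
  qed
  have "(\<Sum>bs\<in>Fr. card {j\<in>Jset. P bs j}) \<le> (\<Sum>bs\<in>Fr. 1)"
    by (rule sum_mono) (rule le1)
  also have "\<dots> = card Fr" by simp
  finally have s1: "(\<Sum>bs\<in>Fr. card {j\<in>Jset. P bs j}) \<le> card Fr" .
  have s2: "(\<Sum>bs\<in>Fr. card {j\<in>Jset. P bs j}) = (\<Sum>j\<in>Jset. card {bs\<in>Fr. P bs j})"
    by (rule double_count[OF finFr finJ])
  have s3: "card {bs\<in>Fr. P bs j} = card I * c0" for j
  proof -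
    have "card {bs\<in>Fr. P bs j} = card {bs\<in>Fr. T3 bs \<in> I}"
      unfolding P_def Fr_def by (rule card_filter_bij[OF bij_transf[OF H]])
    also have "\<dots> = (\<Sum>U\<in>I. card {bs\<in>Fr. T3 bs = U})" by (rule fiber_count[OF finFr finI])
    also have "\<dots> = (\<Sum>U\<in>I. c0)"
    proof (rule sum.cong[OF refl])
      fix U assume "U \<in> I"
      then show "card {bs\<in>Fr. T3 bs = U} = c0"
        unfolding Fr_def c0_def q_def using count_T3[OF H] IU by blast
    qed
    finally show ?thesis by simp
  qed
  have "card (Jset :: 'F poly option set) * (card I * c0) \<le> card Fr"
    using s1 s2 s3 by simp
  also have "card Fr = (q^3 + 1) * G * c0"
    unfolding Fr_def card_frames[OF H] q_def[symmetric] G_def c0_def by (rule arith_ekr(1)[OF q2])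
  finally have "(q^3 + 1) * (card I * c0) \<le> (q^3 + 1) * (G * c0)"
    unfolding card_Jset q_def[symmetric] by (simp add: algebra_simps)
  then have "card I * c0 \<le> G * c0" by (subst (asm) mult_le_cancel1) simp
  moreover have "0 < c0" unfolding c0_def by (rule arith_ekr(2)[OF q2])
  ultimately have "card I \<le> G" by simp
  then show ?thesis unfolding G_def q_def .
qed

lemma dim1_span:
  fixes P :: "(('F::field)^'n) set"
  assumes "vec.subspace P" "vec.dim P = 1"
  shows "\<exists>p. p \<noteq> 0 \<and> P = vec.span {p}"
proof -
  obtain B where B: "B \<subseteq> P" "vec.independent B" "P \<subseteq> vec.span B" "card B = vec.dim P"
    using vec.basis_exists by blast
  then obtain p where Bp: "B = {p}" using assms(2) card_1_singletonE by metis
  have "p \<noteq> 0" using B(2) Bp vec.dependent_zero by blast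
  moreover have "vec.span B = P" using B assms(1) vec.span_minimal by blast
  ultimately show ?thesis using Bp by blast
qed

lemma span_sing_mem: "y \<in> vec.span {p} \<longleftrightarrow> (\<exists>c. y = c *s p)"
  by (auto simp: vec.span_singleton)

lemma indep_sing: "(p :: ('F::field)^'n) \<noteq> 0 \<Longrightarrow> vec.independent {p}"
  by (simp add: vec.independent_insert vec.independent_empty vec.span_empty)

lemma dim_span_sing: "(p :: ('F::field)^'n) \<noteq> 0 \<Longrightarrow> vec.dim (vec.span {p}) = 1"
  using vec.dim_span_eq_card_independent[OF indep_sing] by simp

definition hyp_of :: "(('F::field)^'n) \<Rightarrow> 'n \<Rightarrow> ('F^'n) set" where
  "hyp_of p i = {x. x $ i = 0}"

lemma hyp_subspace: "vec.subspace (hyp_of p i)"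
  unfolding hyp_of_def by (rule vec.subspaceI) auto

lemma hyp_decomp:
  assumes "p $ i \<noteq> 0"
  shows "x - (x $ i / p $ i) *s p \<in> hyp_of p i"
  using assms unfolding hyp_of_def by simp

lemma hyp_sum_UNIV:
  fixes S :: "(('F::field)^'n) set"
  assumes "p $ i \<noteq> 0" "vec.subspace S" "p \<in> S"
  shows "{x + y | x y. x \<in> S \<and> y \<in> hyp_of p i} = UNIV"
proof -
  have "z \<in> {x + y | x y. x \<in> S \<and> y \<in> hyp_of p i}" for z
  proof -
    have "(z $ i / p $ i) *s p \<in> S" using assms(2,3) vec.subspace_scale by blast
    moreover have "z - (z $ i / p $ i) *s p \<in> hyp_of p i" by (rule hyp_decomp[OF assms(1)])
    moreover have "z = (z $ i / p $ i) *s p + (z - (z $ i / p $ i) *s p)" by simp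
    ultimately show ?thesis by blast
  qed
  then show ?thesis by blast
qed

lemma hyp_dim:
  fixes p :: "('F::field)^'n"
  assumes "p $ i \<noteq> 0"
  shows "vec.dim (hyp_of p i) = CARD('n) - 1"
proof -
  have p0: "p \<noteq> 0" using assms by (metis zero_index)
  have "{x + y | x y. x \<in> vec.span {p} \<and> y \<in> hyp_of p i} = UNIV"
    by (rule hyp_sum_UNIV[OF assms vec.subspace_span vec.span_base]) simp
  moreover have "vec.span {p} \<inter> hyp_of p i = {0}"
  proof -
    have "y = 0" if "y \<in> vec.span {p}" "y \<in> hyp_of p i" for y
    proof -
      from that(1) obtain c where y: "y = c *s p" unfolding vec.span_singleton by blast
      have "y $ i = 0" using that(2) unfolding hyp_of_def by simp
      then have "c * p $ i = 0" unfolding y by simp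
      then have "c = 0" using assms by simp
      then show ?thesis using y by simp
    qed
    moreover have "0 \<in> hyp_of p i" unfolding hyp_of_def by simp
    ultimately show ?thesis using vec.span_zero by blast
  qed
  ultimately have "vec.dim (UNIV :: ('F^'n) set) + vec.dim ({0} :: ('F^'n) set) = 1 + vec.dim (hyp_of p i)"
    using vec.dim_sums_Int[OF vec.subspace_span hyp_subspace, of "{p}" p i] dim_span_sing[OF p0] by simp
  then show ?thesis by (simp add: card_cart_basis)
qed

lemma flag_facts:
  assumes "pg_flag23 (E', S')"
  shows "vec.subspace E'" "vec.dim E' = 3" "vec.subspace S'" "vec.dim S' = 4" "E' \<subseteq> S'"
  using assms unfolding pg_flag23_def pg_plane_def pg_solid_def by auto

lemma point_dim:
  fixes E E' S' :: "(('F::field)^'n) set"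
  assumes "vec.subspace E'" "vec.dim E' = 3" "vec.subspace S'" "vec.dim S' = 4" "E' \<subseteq> S'"
    and "vec.subspace E" "E' \<inter> E = {0}" "S' \<inter> E \<noteq> {0}"
  shows "vec.dim (S' \<inter> E) = 1"
proof -
  define X where "X = S' \<inter> E"
  have sX: "vec.subspace X" unfolding X_def using assms vec.subspace_inter by blast
  have "vec.dim X \<noteq> 0"
  proof
    assume "vec.dim X = 0"
    then have "X \<subseteq> {0}" by simp
    moreover have "0 \<in> X" using sX vec.subspace_0 by blast
    ultimately show False using assms(8) unfolding X_def by blast
  qed
  moreover have "vec.dim (E' \<inter> X) = 0"
  proof -
    have "E' \<inter> X \<subseteq> {0}" using assms(7) unfolding X_def by blast
    then show ?thesis by simp
  qed
  moreover have "vec.dim {x + y | x y. x \<in> E' \<and> y \<in> X} \<le> 4"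
  proof -
    have "{x + y | x y. x \<in> E' \<and> y \<in> X} \<subseteq> S'"
      using assms(3,5) vec.subspace_add unfolding X_def by blast
    from vec.dim_subset[OF this] show ?thesis using assms(4) by simp
  qed
  ultimately show ?thesis using vec.dim_sums_Int[OF assms(1) sX] assms(2) unfolding X_def by linarith
qed

lemma count_points:
  fixes E :: "(('F::{field,finite})^'n) set"
  assumes E: "vec.subspace E" "vec.dim E = 3"
  shows "card {P. vec.subspace P \<and> vec.dim P = 1 \<and> P \<subseteq> E} \<le> CARD('F)^2 + CARD('F) + 1"
proof -
  define q where "q = CARD('F)"
  have q2: "q \<ge> 2" unfolding q_def by (rule card_field_ge2)
  define L where "L = {P. vec.subspace P \<and> vec.dim P = 1 \<and> P \<subseteq> E}"
  have finL: "finite L" by (rule finite_subset[OF subset_UNIV]) simp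
  have cA: "card (P - {0}) = q - 1" if "P \<in> L" for P
  proof -
    have "card P = q" using card_subspace[of P] that unfolding L_def q_def by simp
    moreover have "0 \<in> P" using that vec.subspace_0 unfolding L_def by blast
    ultimately show ?thesis by (simp add: card_Diff_singleton)
  qed
  have spanx: "P = vec.span {x}" if "P \<in> L" "x \<in> P" "x \<noteq> 0" for P x
  proof -
    have "vec.span {x} \<subseteq> P" using that vec.span_minimal unfolding L_def by blast
    moreover have "P \<subseteq> vec.span {x}"
      using that indep_sing[OF that(3)] unfolding L_def by (intro vec.card_ge_dim_independent) auto
    ultimately show ?thesis by blast
  qed
  have disj: "\<forall>P\<in>L. \<forall>P'\<in>L. P \<noteq> P' \<longrightarrow> (P - {0}) \<inter> (P' - {0}) = {}"
  proof (intro ballI impI)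
    fix P P' assume PL: "P \<in> L" and PL': "P' \<in> L" and ne: "P \<noteq> P'"
    show "(P - {0}) \<inter> (P' - {0}) = {}"
    proof (rule ccontr)
      assume "(P - {0}) \<inter> (P' - {0}) \<noteq> {}"
      then obtain x where x: "x \<in> P" "x \<in> P'" "x \<noteq> 0" by blast
      have "P = vec.span {x}" by (rule spanx[OF PL x(1) x(3)])
      moreover have "P' = vec.span {x}" by (rule spanx[OF PL' x(2) x(3)])
      ultimately show False using ne by simp
    qed
  qed
  have "card L * (q - 1) = (\<Sum>P\<in>L. card (P - {0}))" using cA by simp
  also have "\<dots> = card (\<Union>P\<in>L. P - {0})"
    by (rule card_UN_disjoint[symmetric]) (use finL disj in auto)
  also have "\<dots> \<le> card (E - {0})"
    by (rule card_mono) (auto simp: L_def)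
  also have "\<dots> = q ^ 3 - 1"
    using card_subspace[OF E(1)] E(2) vec.subspace_0[OF E(1)] unfolding q_def
    by (simp add: card_Diff_singleton)
  also have "\<dots> = (q^2 + q + 1) * (q - 1)"
  proof -
    have "1 \<le> q ^ 3" using q2 by simp
    then have "int (q ^ 3 - 1) = int ((q^2 + q + 1) * (q - 1))"
      using q2 by (simp add: of_nat_diff algebra_simps power3_eq_cube power2_eq_square)
    then show ?thesis by (simp only: of_nat_eq_iff)
  qed
  finally have "card L * (q - 1) \<le> (q^2 + q + 1) * (q - 1)" .
  moreover have "0 < q - 1" using q2 by simp
  ultimately have "card L \<le> q^2 + q + 1" using mult_le_cancel2 by blast
  then show ?thesis unfolding L_def q_def .
qed

lemma cross_point:
  fixes E1 S1 S2 E P :: "(('F::field)^'n) set"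
  assumes "E1 \<inter> S2 \<noteq> {0}" "vec.subspace E1" "vec.subspace S2" "vec.subspace S1" "E1 \<subseteq> S1"
    and "E1 \<inter> E = {0}" "P \<subseteq> E" "P = vec.span {p}" "p $ i \<noteq> 0" "p \<in> S1" "p \<in> S2"
  shows "\<exists>h. h \<noteq> 0 \<and> h \<in> S1 \<inter> hyp_of p i \<and> h \<in> S2 \<inter> hyp_of p i"
proof -
  have "0 \<in> E1 \<inter> S2" using assms(2,3) vec.subspace_0 by blast
  then obtain x where x: "x \<in> E1" "x \<in> S2" "x \<noteq> 0" using assms(1) by blast
  define c where "c = x $ i / p $ i"
  define h where "h = x - c *s p"
  have hH: "h \<in> hyp_of p i" unfolding h_def c_def by (rule hyp_decomp[OF assms(9)])
  have xS1: "x \<in> S1" using x(1) assms(5) by blast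
  have h1: "h \<in> S1" unfolding h_def
    by (rule vec.subspace_diff[OF assms(4) xS1 vec.subspace_scale[OF assms(4) assms(10)]])
  have h2: "h \<in> S2" unfolding h_def
    by (rule vec.subspace_diff[OF assms(3) x(2) vec.subspace_scale[OF assms(3) assms(11)]])
  have "h \<noteq> 0"
  proof
    assume "h = 0"
    then have "x = c *s p" unfolding h_def by simp
    then have "x \<in> P" unfolding assms(8) by (simp add: vec.span_scale vec.span_base)
    then have "x \<in> E1 \<inter> E" using x(1) assms(7) by blast
    then show False using x(3) assms(6) by blast
  qed
  then show ?thesis using hH h1 h2 by blast
qed

lemma solP_bound:
  fixes C :: "(('F::{field,finite}) pt7 set \<times> 'F pt7 set) set" and E P :: "'F pt7 set"
  assumes indep: "kneser_indep C"
    and P: "vec.subspace P" "vec.dim P = 1" "P \<subseteq> E"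
  shows "card {S'. \<exists>E'. (E', S') \<in> C \<and> E' \<inter> E = {0} \<and> S' \<inter> E = P}
           \<le> (CARD('F)^4 + CARD('F)^3 + CARD('F)^2 + CARD('F) + 1) * (CARD('F)^2 + 1)"
proof -
  define SP where "SP = {S'. \<exists>E'. (E', S') \<in> C \<and> E' \<inter> E = {0} \<and> S' \<inter> E = P}"
  obtain p where p0: "p \<noteq> 0" and Pp: "P = vec.span {p}" using dim1_span[OF P(1,2)] by blast
  obtain i where pi: "p $ i \<noteq> 0" using p0 by (metis vec_eq_iff zero_index)
  define H where "H = hyp_of p i"
  have sH: "vec.subspace H" unfolding H_def by (rule hyp_subspace)
  have dH: "vec.dim H = 6" unfolding H_def using hyp_dim[OF pi] by simp
  have flags: "\<forall>f\<in>C. pg_flag23 f" using indep unfolding kneser_indep_def by blast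
  have pP: "p \<in> P" unfolding Pp by (rule vec.span_base) simp
  have SPf: "\<exists>E'. (E', S') \<in> C \<and> E' \<inter> E = {0} \<and> S' \<inter> E = P \<and> vec.subspace E' \<and> E' \<subseteq> S'
      \<and> vec.subspace S' \<and> vec.dim S' = 4 \<and> p \<in> S'" if S'SP: "S' \<in> SP" for S'
  proof -
    obtain E' where e: "(E', S') \<in> C" "E' \<inter> E = {0}" "S' \<inter> E = P" using S'SP unfolding SP_def by blast
    have "pg_flag23 (E', S')" using flags e(1) by blast
    then have ff: "vec.subspace E'" "vec.subspace S'" "vec.dim S' = 4" "E' \<subseteq> S'"
      using flag_facts[of E' S'] by blast+
    have "p \<in> S'" using e(3) pP by blast
    then show ?thesis apply (intro exI[of _ E']) using e ff by simp
  qed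
  have dimI: "vec.subspace (S' \<inter> H) \<and> vec.dim (S' \<inter> H) = 3 \<and> S' \<inter> H \<subseteq> H" if S'SP: "S' \<in> SP" for S'
  proof -
    have e: "vec.subspace S'" "vec.dim S' = 4" "p \<in> S'" using SPf[OF S'SP] by blast+
    have "{x + y | x y. x \<in> S' \<and> y \<in> H} = UNIV" unfolding H_def by (rule hyp_sum_UNIV[OF pi e(1,3)])
    then have "7 + vec.dim (S' \<inter> H) = 4 + 6"
      using vec.dim_sums_Int[OF e(1) sH] e(2) dH by (simp add: card_cart_basis)
    then show ?thesis using vec.subspace_inter[OF e(1) sH] by simp
  qed
  have inj: "inj_on (\<lambda>S'. S' \<inter> H) SP"
  proof -
    have sub: "S1 \<subseteq> S2" if th: "S1 \<in> SP" "S2 \<in> SP" "S1 \<inter> H = S2 \<inter> H" for S1 S2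
    proof
      fix x assume x: "x \<in> S1"
      have e1: "vec.subspace S1" "p \<in> S1" using SPf[OF th(1)] by blast+
      have e2: "vec.subspace S2" "p \<in> S2" using SPf[OF th(2)] by blast+
      define c where "c = x $ i / p $ i"
      have "x - c *s p \<in> S1" by (rule vec.subspace_diff[OF e1(1) x vec.subspace_scale[OF e1(1) e1(2)]])
      moreover have "x - c *s p \<in> H" unfolding H_def c_def by (rule hyp_decomp[OF pi])
      ultimately have "x - c *s p \<in> S1 \<inter> H" by blast
      then have "x - c *s p \<in> S2" using th(3) by blast
      then have "(x - c *s p) + c *s p \<in> S2" by (rule vec.subspace_add[OF e2(1) _ vec.subspace_scale[OF e2(1) e2(2)]])
      then show "x \<in> S2" by simp
    qed
    show ?thesis
    proof (rule inj_onI)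
      fix S1 S2 assume a: "S1 \<in> SP" "S2 \<in> SP" "S1 \<inter> H = S2 \<inter> H"
      show "S1 = S2" using sub[OF a] sub[OF a(2) a(1) a(3)[symmetric]] by (rule subset_antisym)
    qed
  qed
  have inter: "\<forall>U\<in>(\<lambda>S'. S' \<inter> H) ` SP. \<forall>V\<in>(\<lambda>S'. S' \<inter> H) ` SP. U \<inter> V \<noteq> {0}"
  proof (intro ballI)
    fix U V assume "U \<in> (\<lambda>S'. S' \<inter> H) ` SP" "V \<in> (\<lambda>S'. S' \<inter> H) ` SP"
    then obtain S1 S2 where S1: "S1 \<in> SP" "U = S1 \<inter> H" and S2: "S2 \<in> SP" "V = S2 \<inter> H" by (auto simp only: image_iff)
    show "U \<inter> V \<noteq> {0}"
    proof (cases "S1 = S2")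
      case True
      have dU: "vec.dim U = 3" using dimI[OF S1(1)] S1(2) by simp
      have UV: "U \<inter> V = U" using True S1(2) S2(2) by simp
      show ?thesis
      proof
        assume "U \<inter> V = {0}"
        then have "vec.dim U = 0" using UV by simp
        then show False using dU by simp
      qed
    next
      case False
      obtain E1 where e1: "(E1, S1) \<in> C" "E1 \<inter> E = {0}" "S1 \<inter> E = P" "vec.subspace E1" "E1 \<subseteq> S1"
        "vec.subspace S1" "p \<in> S1" using SPf[OF S1(1)] by blast
      obtain E2 where e2: "(E2, S2) \<in> C" "E2 \<inter> E = {0}" "S2 \<inter> E = P" "vec.subspace E2" "E2 \<subseteq> S2"
        "vec.subspace S2" "p \<in> S2" using SPf[OF S2(1)] by blast
      have "\<not> kneser_adj (E1, S1) (E2, S2)" using indep e1(1) e2(1) unfolding kneser_indep_def by blast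
      then have "E1 \<inter> S2 \<noteq> {0} \<or> E2 \<inter> S1 \<noteq> {0}"
        using False unfolding kneser_adj_def pg_disjoint_def by auto
      then obtain h where "h \<noteq> 0" "h \<in> S1 \<inter> hyp_of p i" "h \<in> S2 \<inter> hyp_of p i"
      proof
        assume "E1 \<inter> S2 \<noteq> {0}"
        then show ?thesis using cross_point[OF _ e1(4) e2(6) e1(6) e1(5) e1(2) P(3) Pp pi e1(7) e2(7)] that by blast
      next
        assume "E2 \<inter> S1 \<noteq> {0}"
        then show ?thesis using cross_point[OF _ e2(4) e1(6) e2(6) e2(5) e2(2) P(3) Pp pi e2(7) e1(7)] that by blast
      qed
      then show ?thesis using S1(2) S2(2) unfolding H_def by blast
    qed
  qed
  have "card ((\<lambda>S'. S' \<inter> H) ` SP) \<le> (CARD('F)^4 + CARD('F)^3 + CARD('F)^2 + CARD('F) + 1) * (CARD('F)^2 + 1)"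
    by (rule ekr[OF sH dH _ inter]) (use dimI in blast)
  then show ?thesis using card_image[OF inj] unfolding SP_def by simp
qed

lemma gauss_eq:
  assumes q2: "(q::nat) \<ge> 2"
  shows "gauss_5_2 q = (q^4 + q^3 + q^2 + q + 1) * (q^2 + 1)"
proof -
  have h: "int (q ^ n - 1) = int q ^ n - 1" for n
  proof -
    have "1 \<le> q ^ n" using q2 by simp
    then show ?thesis by (simp add: of_nat_diff)
  qed
  have h1: "int (q - 1) = int q - 1" using q2 by (simp add: of_nat_diff)
  have "int ((q^5 - 1) * (q^4 - 1)) = int (((q^2 - 1) * (q - 1)) * ((q^4 + q^3 + q^2 + q + 1) * (q^2 + 1)))"
    unfolding of_nat_mult of_nat_add h h1
    by (simp only: of_nat_power of_nat_1 of_nat_numeral) algebra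
  then have e: "(q^5 - 1) * (q^4 - 1) = ((q^2 - 1) * (q - 1)) * ((q^4 + q^3 + q^2 + q + 1) * (q^2 + 1))"
    by (simp only: of_nat_eq_iff)
  have "q^2 \<ge> 2^2" using q2 by (intro power_mono) auto
  then have nz: "(q^2 - 1) * (q - 1) \<noteq> 0" using q2 by simp
  show ?thesis unfolding gauss_5_2_def e using nz by simp
qed

lemma poly_id:
  fixes q :: nat
  shows "(q^2 + q + 1) * ((q^4 + q^3 + q^2 + q + 1) * (q^2 + 1))
       = q^8 + 2*q^7 + 4*q^6 + 5*q^5 + 6*q^4 + 5*q^3 + 4*q^2 + 2*q + 1"
proof -
  have "int ((q^2 + q + 1) * ((q^4 + q^3 + q^2 + q + 1) * (q^2 + 1)))
       = int (q^8 + 2*q^7 + 4*q^6 + 5*q^5 + 6*q^4 + 5*q^3 + 4*q^2 + 2*q + 1)"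
    by (simp only: of_nat_mult of_nat_add of_nat_power of_nat_1 of_nat_numeral) algebra
  then show ?thesis by (simp only: of_nat_eq_iff)
qed

theorem lemma3p3:
  fixes C :: "(('F::{field,finite}) pt7 set \<times> 'F pt7 set) set"
    and \<xi> :: nat and E S :: "'F pt7 set"
  assumes "kneser_indep C"
    and "\<forall>S'. pg_solid S' \<longrightarrow> card {f\<in>C. snd f = S'} \<le> \<xi>"
    and "(E, S) \<in> C"
  shows "card {(E', S') \<in> C. pg_disjoint E' E \<and> \<not> pg_disjoint S' E}
           \<le> (CARD('F)^2 + CARD('F) + 1) * gauss_5_2 CARD('F) * \<xi>
       \<and> (CARD('F)^2 + CARD('F) + 1) * gauss_5_2 CARD('F)
           = CARD('F)^8 + 2*CARD('F)^7 + 4*CARD('F)^6 + 5*CARD('F)^5 + 6*CARD('F)^4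
             + 5*CARD('F)^3 + 4*CARD('F)^2 + 2*CARD('F) + 1"
proof -
  define q where "q = CARD('F)"
  have q2: "q \<ge> 2" unfolding q_def by (rule card_field_ge2)
  define G where "G = (q^4 + q^3 + q^2 + q + 1) * (q^2 + 1)"
  have gauss: "gauss_5_2 q = G" unfolding G_def by (rule gauss_eq[OF q2])
  define T where "T = {(E', S') \<in> C. pg_disjoint E' E \<and> \<not> pg_disjoint S' E}"
  have flags: "\<forall>f\<in>C. pg_flag23 f" using assms(1) unfolding kneser_indep_def by blast
  have Ef: "vec.subspace E" "vec.dim E = 3" using flag_facts[of E S] flags assms(3) by blast+
  have Tmem: "f \<in> T \<longleftrightarrow> f \<in> C \<and> fst f \<inter> E = {0} \<and> snd f \<inter> E \<noteq> {0}" for f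
    by (cases f) (simp add: T_def pg_disjoint_def)
  define Sol where "Sol = snd ` T"
  have finSol: "finite Sol" by (rule finite_subset[OF subset_UNIV]) simp
  have solid: "pg_solid S'" if sS: "S' \<in> Sol" for S'
  proof -
    obtain f where "f \<in> T" "S' = snd f" using sS unfolding Sol_def by blast
    then show ?thesis using flags Tmem unfolding pg_flag23_def by blast
  qed
  have step1: "card T \<le> card Sol * \<xi>"
  proof -
    have "T \<subseteq> (\<Union>S'\<in>Sol. {f\<in>C. snd f = S'})" using Tmem unfolding Sol_def by blast
    then have "card T \<le> card (\<Union>S'\<in>Sol. {f\<in>C. snd f = S'})"
      by (rule card_mono[rotated]) (rule finite_subset[OF subset_UNIV], simp)
    also have "\<dots> \<le> (\<Sum>S'\<in>Sol. card {f\<in>C. snd f = S'})" by (rule card_UN_le[OF finSol])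
    also have "\<dots> \<le> (\<Sum>S'\<in>Sol. \<xi>)" by (rule sum_mono) (use assms(2) solid in blast)
    also have "\<dots> = card Sol * \<xi>" by simp
    finally show ?thesis .
  qed
  define Pts where "Pts = (\<lambda>S'. S' \<inter> E) ` Sol"
  have finPts: "finite Pts" by (rule finite_subset[OF subset_UNIV]) simp
  have Pfacts: "vec.subspace P \<and> vec.dim P = 1 \<and> P \<subseteq> E" if pP: "P \<in> Pts" for P
  proof -
    obtain f where fT: "f \<in> T" and P: "P = snd f \<inter> E" using pP unfolding Pts_def Sol_def by blast
    obtain E0 S0 where f: "f = (E0, S0)" by (cases f)
    have t: "(E0, S0) \<in> C" "E0 \<inter> E = {0}" "S0 \<inter> E \<noteq> {0}" using fT Tmem f by auto
    have ff: "vec.subspace E0" "vec.dim E0 = 3" "vec.subspace S0" "vec.dim S0 = 4" "E0 \<subseteq> S0"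
      using flag_facts[of E0 S0] flags t(1) by blast+
    have "vec.dim (S0 \<inter> E) = 1" by (rule point_dim[OF ff Ef(1) t(2,3)])
    moreover have "vec.subspace (S0 \<inter> E)" using vec.subspace_inter[OF ff(3) Ef(1)] .
    ultimately show ?thesis using P f by auto
  qed
  have step2: "card Sol \<le> card Pts * G"
  proof -
    have "Sol \<subseteq> (\<Union>P\<in>Pts. {S'\<in>Sol. S' \<inter> E = P})" unfolding Pts_def by blast
    then have "card Sol \<le> card (\<Union>P\<in>Pts. {S'\<in>Sol. S' \<inter> E = P})"
      by (rule card_mono[rotated]) (rule finite_subset[OF subset_UNIV], simp)
    also have "\<dots> \<le> (\<Sum>P\<in>Pts. card {S'\<in>Sol. S' \<inter> E = P})" by (rule card_UN_le[OF finPts])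
    also have "\<dots> \<le> (\<Sum>P\<in>Pts. G)"
    proof (rule sum_mono)
      fix P assume PP: "P \<in> Pts"
      have pf: "vec.subspace P" "vec.dim P = 1" "P \<subseteq> E" using Pfacts[OF PP] by blast+
      have "{S'\<in>Sol. S' \<inter> E = P} \<subseteq> {S'. \<exists>E'. (E', S') \<in> C \<and> E' \<inter> E = {0} \<and> S' \<inter> E = P}"
      proof
        fix S' assume "S' \<in> {S'\<in>Sol. S' \<inter> E = P}"
        then obtain f where "f \<in> T" "S' = snd f" "S' \<inter> E = P" unfolding Sol_def by blast
        then show "S' \<in> {S'. \<exists>E'. (E', S') \<in> C \<and> E' \<inter> E = {0} \<and> S' \<inter> E = P}"
          using Tmem by (cases f) auto
      qed
      then have "card {S'\<in>Sol. S' \<inter> E = P}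
          \<le> card {S'. \<exists>E'. (E', S') \<in> C \<and> E' \<inter> E = {0} \<and> S' \<inter> E = P}"
        by (rule card_mono[rotated]) (rule finite_subset[OF subset_UNIV], simp)
      also have "\<dots> \<le> G" unfolding G_def q_def by (rule solP_bound[OF assms(1) pf])
      finally show "card {S'\<in>Sol. S' \<inter> E = P} \<le> G" .
    qed
    also have "\<dots> = card Pts * G" by simp
    finally show ?thesis .
  qed
  have step3: "card Pts \<le> q^2 + q + 1"
  proof -
    have "Pts \<subseteq> {P. vec.subspace P \<and> vec.dim P = 1 \<and> P \<subseteq> E}" using Pfacts by blast
    then have "card Pts \<le> card {P. vec.subspace P \<and> vec.dim P = 1 \<and> P \<subseteq> E}"
      by (rule card_mono[rotated]) (rule finite_subset[OF subset_UNIV], simp)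
    also have "\<dots> \<le> q^2 + q + 1" unfolding q_def by (rule count_points[OF Ef])
    finally show ?thesis .
  qed
  have "card T \<le> card Sol * \<xi>" by (rule step1)
  also have "\<dots> \<le> (card Pts * G) * \<xi>" using step2 by (rule mult_right_mono) simp
  also have "\<dots> \<le> ((q^2 + q + 1) * G) * \<xi>" using step3 by (intro mult_right_mono) simp_all
  finally have main: "card T \<le> (q^2 + q + 1) * gauss_5_2 q * \<xi>" using gauss by simp
  have id: "(q^2 + q + 1) * gauss_5_2 q = q^8 + 2*q^7 + 4*q^6 + 5*q^5 + 6*q^4 + 5*q^3 + 4*q^2 + 2*q + 1"
    unfolding gauss G_def by (rule poly_id)
  show ?thesis using main id unfolding T_def q_def by blast
qed


end
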